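(* Let $\phi$ be a nonautonomous random dynamical system (NRDS) on $(\Omega,\mathcal{F},\mathbb{P})$ with finite state space $X$. For $t_0\le t$ let $\Gamma(t,t_0):=\{\omega\in\Omega\mid\phi(t,t_0,x_1,\omega)=\phi(t,t_0,x_2,\omega)\text{ for all }x_1,x_2\in X\}$ and for $t\in\mathbb{R}$, $\omega\in\Omega$ let $A(t,\omega):=\bigcap_{t_0\le t}\phi(t,t_0,X,\omega)$. Consider the statements: (1) There exists $p>0$ such that for any $t\in\mathbb{R}$ there exists $t_0<t$ with $\mathbb{P}(\Gamma(t,t_0))>p$. (2) For any $t\in\mathbb{R}$, $\lim_{t_0\to-\infty}\mathbb{P}(\Gamma(t,t_0))=1$. (3) For any $t\in\mathbb{R}$, $\mathbb{P}(\{\omega\in\Omega\mid \phi(t,t_0,X,\omega)\text{ is a singleton for some }t_0<t\})=1$. (4) For all $t\in\mathbb{R}$ the sets $A(t,\omega)$ are singletons for almost all $\omega\in\Omega$. Then (2), (3), (4) are equivalent to each other and imply (1). If in addition the solutions are stochastically independent on non-overlapping intervals, i.e. $\phi(t,t_0,x,\cdot)$ is independent of $\phi(s,s_0,x,\cdot)$ whenever $[t_0,t)\cap[s_0,s)=\emptyset$, then (1) is equivalent to (2)–(4). If, moreover, the $t_0$ in (1) can be chosen such that $t-t_0$ is bounded uniformly in $t$, then the convergence in (2) has an exponential rate, and the singletons $A(t,\omega)$ also provide a global random forward attractor.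
   Context: Let $\mathbb{R}^2_{\ge}:=\{(t,s)\in\mathbb{R}^2\mid t\ge s\}$. A map $\phi:\mathbb{R}^2_\ge\times X\times\Omega\to X$ ($X$ a Polish space, here finite with the discrete topology) is an NRDS if (i) it is $(\mathcal{B}(\mathbb{R}^2_\ge)\times\mathcal{B}(X)\times\mathcal{F},\mathcal{B}(X))$-measurable; (ii) $\phi(t,t,\cdot,\omega)$ is the identity; (iii) $\phi(t,t_0,x,\omega)=\phi(t,s,\phi(s,t_0,x,\omega),\omega)$ for all $t\ge s\ge t_0$; (iv) $x\mapsto\phi(t,s,x,\omega)$ is continuous. $\phi(t,t_0,B,\omega)$ denotes the image of a set $B\subset X$. On the finite space use $d(x_1,x_2)=1$ if $x_1\neq x_2$, $0$ otherwise, and $\mathrm{dist}(A_1,A_2)=\sup_{a_1\in A_1}\inf_{a_2\in A_2}d(a_1,a_2)$. A compact nonautonomous random set $A=(A(t))_{t\in\mathbb{R}}$ (measurable subsets of $X\times\Omega$ with compact $\omega$-sections $A(t,\omega)$) that is strictly invariant, $\phi(t,t_0,A(t_0,\omega),\omega)=A(t,\omega)$ for all $t\ge t_0$ a.s., is a global random forward attractor if for each $t_0\in\mathbb{R}$, $\lim_{t\to\infty}\mathrm{dist}(\phi(t,t_0,X,\omega),A(t,\omega))=0$ a.s. *)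

theory Defs
  imports "HOL-Probability.Probability"
begin

text \<open>Finite state space: the type 'a :: finite, X = UNIV, with the discrete
  topology / sigma-algebra (count_space UNIV). Continuity in x is automatic.\<close>

definition NRDS :: "'w measure \<Rightarrow> (real \<Rightarrow> real \<Rightarrow> 'a \<Rightarrow> 'w \<Rightarrow> 'a) \<Rightarrow> bool" where
  "NRDS M phi \<longleftrightarrow>
     (\<lambda>((t, s), x, w). phi t s x w) \<in>
        measurable (restrict_space (borel :: (real \<times> real) measure) {(t, s). s \<le> t}
                     \<Otimes>\<^sub>M (count_space UNIV \<Otimes>\<^sub>M M)) (count_space UNIV)
   \<and> (\<forall>t x w. phi t t x w = x)
   \<and> (\<forall>t s t0 x w. t0 \<le> s \<and> s \<le> t \<longrightarrow> phi t t0 x w = phi t s (phi s t0 x w) w)"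

definition Gamma :: "'w measure \<Rightarrow> (real \<Rightarrow> real \<Rightarrow> 'a \<Rightarrow> 'w \<Rightarrow> 'a) \<Rightarrow> real \<Rightarrow> real \<Rightarrow> 'w set" where
  "Gamma M phi t t0 = {w \<in> space M. \<forall>x1 x2. phi t t0 x1 w = phi t t0 x2 w}"

definition pullback_set :: "(real \<Rightarrow> real \<Rightarrow> 'a \<Rightarrow> 'w \<Rightarrow> 'a) \<Rightarrow> real \<Rightarrow> 'w \<Rightarrow> 'a set" where
  "pullback_set phi t w = (\<Inter>t0\<in>{..t}. range (\<lambda>x. phi t t0 x w))"

definition cond1 :: "'w measure \<Rightarrow> (real \<Rightarrow> real \<Rightarrow> 'a \<Rightarrow> 'w \<Rightarrow> 'a) \<Rightarrow> bool" where
  "cond1 M phi \<longleftrightarrow> (\<exists>p>0. \<forall>t. \<exists>t0<t. measure M (Gamma M phi t t0) > p)"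

definition cond2 :: "'w measure \<Rightarrow> (real \<Rightarrow> real \<Rightarrow> 'a \<Rightarrow> 'w \<Rightarrow> 'a) \<Rightarrow> bool" where
  "cond2 M phi \<longleftrightarrow> (\<forall>t. ((\<lambda>t0. measure M (Gamma M phi t t0)) \<longlongrightarrow> 1) at_bot)"

definition cond3 :: "'w measure \<Rightarrow> (real \<Rightarrow> real \<Rightarrow> 'a \<Rightarrow> 'w \<Rightarrow> 'a) \<Rightarrow> bool" where
  "cond3 M phi \<longleftrightarrow>
     (\<forall>t. measure M {w \<in> space M. \<exists>t0<t. is_singleton (range (\<lambda>x. phi t t0 x w))} = 1)"

definition cond4 :: "'w measure \<Rightarrow> (real \<Rightarrow> real \<Rightarrow> 'a \<Rightarrow> 'w \<Rightarrow> 'a) \<Rightarrow> bool" where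
  "cond4 M phi \<longleftrightarrow> (\<forall>t. AE w in M. is_singleton (pullback_set phi t w))"

definition cond1_uniform :: "'w measure \<Rightarrow> (real \<Rightarrow> real \<Rightarrow> 'a \<Rightarrow> 'w \<Rightarrow> 'a) \<Rightarrow> bool" where
  "cond1_uniform M phi \<longleftrightarrow>
     (\<exists>p>0. \<exists>T. \<forall>t. \<exists>t0<t. t - t0 \<le> T \<and> measure M (Gamma M phi t t0) > p)"

definition indep_intervals :: "'w measure \<Rightarrow> (real \<Rightarrow> real \<Rightarrow> 'a \<Rightarrow> 'w \<Rightarrow> 'a) \<Rightarrow> bool" where
  "indep_intervals M phi \<longleftrightarrow>
     (\<forall>I :: (real \<times> real) set.
        (\<forall>i\<in>I. fst i \<le> snd i) \<and>
        (\<forall>i\<in>I. \<forall>j\<in>I. i \<noteq> j \<longrightarrow> {fst i..<snd i} \<inter> {fst j..<snd j} = {}) \<longrightarrow>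
        prob_space.indep_vars M (\<lambda>_. count_space UNIV)
          (\<lambda>i w. (\<lambda>x. phi (snd i) (fst i) x w)) I)"

definition ddist :: "'a \<Rightarrow> 'a \<Rightarrow> real" where
  "ddist x1 x2 = (if x1 = x2 then 0 else 1)"

definition hsdist :: "'a set \<Rightarrow> 'a set \<Rightarrow> real" where
  "hsdist A1 A2 = (SUP a1\<in>A1. INF a2\<in>A2. ddist a1 a2)"

text \<open>Global random forward attractor (compactness of the sections is automatic
  on a finite discrete space).\<close>
definition global_random_forward_attractor ::
  "'w measure \<Rightarrow> (real \<Rightarrow> real \<Rightarrow> 'a \<Rightarrow> 'w \<Rightarrow> 'a) \<Rightarrow> (real \<Rightarrow> 'w \<Rightarrow> 'a set) \<Rightarrow> bool" where
  "global_random_forward_attractor M phi A \<longleftrightarrow>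
     (\<forall>t. {(x, w). w \<in> space M \<and> x \<in> A t w} \<in> sets (count_space UNIV \<Otimes>\<^sub>M M))
   \<and> (AE w in M. \<forall>t0 t. t0 \<le> t \<longrightarrow> (\<lambda>x. phi t t0 x w) ` A t0 w = A t w)
   \<and> (\<forall>t0. AE w in M.
        ((\<lambda>t. hsdist (range (\<lambda>x. phi t t0 x w)) (A t w)) \<longlongrightarrow> 0) at_top)"

end

theory Submission
  imports Defs
begin

locale nrds = prob_space +
  fixes phi :: "real \<Rightarrow> real \<Rightarrow> 's::finite \<Rightarrow> 'a \<Rightarrow> 's"
  assumes N: "NRDS M phi"
begin

lemma ident[simp]: "phi t t x w = x" using N by (simp add: NRDS_def)

lemma cocycle: "t0 \<le> s \<Longrightarrow> s \<le> t \<Longrightarrow> phi t t0 x w = phi t s (phi s t0 x w) w"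
  using N by (simp add: NRDS_def)

lemma meas_phi[measurable]:
  assumes "t0 \<le> t" shows "(\<lambda>w. phi t t0 x w) \<in> measurable M (count_space UNIV)"
proof -
  have m: "(\<lambda>((t, s), x, w). phi t s x w) \<in>
        measurable (restrict_space (borel :: (real \<times> real) measure) {(t, s). s \<le> t}
                     \<Otimes>\<^sub>M (count_space UNIV \<Otimes>\<^sub>M M)) (count_space UNIV)"
    using N by (simp add: NRDS_def)
  have c: "(\<lambda>w. ((t,t0),x,w)) \<in> measurable M (restrict_space (borel :: (real \<times> real) measure) {(t, s). s \<le> t}
                     \<Otimes>\<^sub>M (count_space UNIV \<Otimes>\<^sub>M M))"
    using assms by (intro measurable_Pair measurable_const measurable_ident_sets)
       (auto simp: space_restrict_space)
  from measurable_comp[OF c m] show ?thesis by (simp add: o_def)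
qed

lemma Gamma_sets: assumes "t0 \<le> t" shows "Gamma M phi t t0 \<in> sets M"
proof -
  have "Gamma M phi t t0 = {w \<in> space M. \<forall>x1 x2. phi t t0 x1 w = phi t t0 x2 w}"
    by (simp add: Gamma_def)
  also have "\<dots> \<in> sets M" using assms by measurable
  finally show ?thesis .
qed

lemma Gamma_sub:
  assumes "t0 \<le> s1" "s1 \<le> s2" "s2 \<le> t"
  shows "Gamma M phi s2 s1 \<subseteq> Gamma M phi t t0"
proof
  fix w assume w: "w \<in> Gamma M phi s2 s1"
  have "phi t t0 x w = phi t s2 (phi s2 s1 (phi s1 t0 x w) w) w" for x
    using assms cocycle by (metis order.trans)
  have eq: "\<forall>x1 x2. phi s2 s1 x1 w = phi s2 s1 x2 w" and ws: "w \<in> space M"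
    using w by (auto simp: Gamma_def)
  have "phi t t0 x1 w = phi t t0 x2 w" for x1 x2
  proof -
    have "phi t t0 x1 w = phi t s2 (phi s2 s1 (phi s1 t0 x1 w) w) w" by fact
    also have "phi s2 s1 (phi s1 t0 x1 w) w = phi s2 s1 (phi s1 t0 x2 w) w" using eq by blast
    also have "phi t s2 (phi s2 s1 (phi s1 t0 x2 w) w) w = phi t t0 x2 w" by (rule sym) fact
    finally show ?thesis .
  qed
  with ws show "w \<in> Gamma M phi t t0" unfolding Gamma_def by blast
qed


lemma range_sub:
  assumes "t0' \<le> t0" "t0 \<le> t"
  shows "range (\<lambda>x. phi t t0' x w) \<subseteq> range (\<lambda>x. phi t t0 x w)"
proof clarify
  fix x
  have "phi t t0' x w = phi t t0 (phi t0 t0' x w) w" using cocycle[OF assms] .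
  then show "phi t t0' x w \<in> range (\<lambda>x. phi t t0 x w)" by (metis rangeI)
qed


lemma Gamma_iff: "w \<in> space M \<Longrightarrow> w \<in> Gamma M phi t t0 \<longleftrightarrow> is_singleton (range (\<lambda>x. phi t t0 x w))"
  unfolding Gamma_def is_singleton_def by auto (metis rangeI singletonD)


lemma stab:
  "\<exists>s0\<le>t. pullback_set phi t w = range (\<lambda>x. phi t s0 x w)
      \<and> (\<forall>s\<le>s0. range (\<lambda>x. phi t s x w) = range (\<lambda>x. phi t s0 x w))"
proof -
  define r where "r s = range (\<lambda>x. phi t s x w)" for s
  have "\<exists>n. (\<exists>s\<le>t. card (r s) = n)" by blast
  from ex_has_least_nat[of "\<lambda>n. \<exists>s\<le>t. card (r s) = n" _ id]
  obtain s0 where s0: "s0 \<le> t" "\<And>s. s \<le> t \<Longrightarrow> card (r s0) \<le> card (r s)"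
    by (metis id_apply order_refl)
  have eq: "r s = r s0" if "s \<le> s0" for s
  proof -
    have "r s \<subseteq> r s0" using range_sub[OF that s0(1)] by (simp add: r_def)
    moreover have "card (r s0) \<le> card (r s)" using s0 that by simp
    ultimately show ?thesis by (intro card_seteq) auto
  qed
  have "pullback_set phi t w = r s0"
  proof
    show "pullback_set phi t w \<subseteq> r s0" unfolding pullback_set_def r_def by (rule INT_lower) (use s0(1) in simp)
    show "r s0 \<subseteq> pullback_set phi t w"
      unfolding pullback_set_def
    proof (intro INT_greatest)
      fix s assume "s \<in> {..t}"
      show "r s0 \<subseteq> range (\<lambda>x. phi t s x w)"
      proof (cases "s \<le> s0")
        case True then show ?thesis using eq[OF True] unfolding r_def by simp
      next
        case False then show ?thesis using range_sub[of s0 s t w] \<open>s \<in> {..t}\<close> by (simp add: r_def)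
      qed
    qed
  qed
  then show ?thesis using s0(1) eq unfolding r_def by blast
qed


lemma pullback_ne: "pullback_set phi t w \<noteq> {}"
  using stab[of t w] by auto


lemma pullback_sub: "t0 \<le> t \<Longrightarrow> pullback_set phi t w \<subseteq> range (\<lambda>x. phi t t0 x w)"
  by (auto simp: pullback_set_def)


lemma singleton_sub: "is_singleton B \<Longrightarrow> A \<subseteq> B \<Longrightarrow> A \<noteq> {} \<Longrightarrow> is_singleton A"
  by (metis is_singleton_def subset_singletonD)


lemma pullback_singleton_iff:
  "is_singleton (pullback_set phi t w) \<longleftrightarrow> (\<exists>t0<t. is_singleton (range (\<lambda>x. phi t t0 x w)))"
proof
  assume "\<exists>t0<t. is_singleton (range (\<lambda>x. phi t t0 x w))"
  then obtain t0 where "t0 < t" "is_singleton (range (\<lambda>x. phi t t0 x w))" by auto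
  then show "is_singleton (pullback_set phi t w)"
    using singleton_sub pullback_sub pullback_ne by (meson less_imp_le)
next
  assume a: "is_singleton (pullback_set phi t w)"
  obtain s0 where s0: "s0 \<le> t" "pullback_set phi t w = range (\<lambda>x. phi t s0 x w)"
    "\<And>s. s\<le>s0 \<Longrightarrow> range (\<lambda>x. phi t s x w) = range (\<lambda>x. phi t s0 x w)"
    using stab[of t w] by blast
  show "\<exists>t0<t. is_singleton (range (\<lambda>x. phi t t0 x w))"
  proof (rule exI[of _ "s0 - 1"], rule conjI)
    show "s0 - 1 < t" using s0(1) by simp
    have "range (\<lambda>x. phi t (s0 - 1) x w) = pullback_set phi t w" using s0(2) s0(3)[of "s0-1"] by simp
    then show "is_singleton (range (\<lambda>x. phi t (s0 - 1) x w))" using a by simp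
  qed
qed


definition S3 where "S3 t = {w \<in> space M. \<exists>t0<t. is_singleton (range (\<lambda>x. phi t t0 x w))}"


lemma S3_eq: "S3 t = (\<Union>n. Gamma M phi t (t - real (Suc n)))"
proof safe
  fix w assume "w \<in> S3 t"
  then obtain t0 where t0: "w \<in> space M" "t0 < t" "is_singleton (range (\<lambda>x. phi t t0 x w))"
    by (auto simp: S3_def)
  obtain n :: nat where n: "t - t0 \<le> real n" using real_arch_simple by blast
  have "w \<in> Gamma M phi t t0" using t0 Gamma_iff by auto
  moreover have "Gamma M phi t t0 \<subseteq> Gamma M phi t (t - real (Suc n))"
    using Gamma_sub[of "t - real (Suc n)" t0 t t] n t0 by auto
  ultimately show "w \<in> (\<Union>n. Gamma M phi t (t - real (Suc n)))" by auto
next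
  fix w n assume "w \<in> Gamma M phi t (t - real (Suc n))"
  then show "w \<in> S3 t" unfolding S3_def using Gamma_iff[of w t "t - real (Suc n)"]
    by (auto simp: Gamma_def intro!: exI[of _ "t - real (Suc n)"])
qed


lemma S3_sets: "S3 t \<in> sets M"
  unfolding S3_eq by (intro sets.countable_UN) (auto intro: Gamma_sets)


lemma Gamma_le_S3: "t0 < t \<Longrightarrow> prob (Gamma M phi t t0) \<le> prob (S3 t)"
  using S3_sets Gamma_iff by (intro finite_measure_mono) (auto simp: S3_def Gamma_def)


lemma lim_S3: "((\<lambda>t0. prob (Gamma M phi t t0)) \<longlongrightarrow> prob (S3 t)) at_bot"
proof -
  let ?A = "\<lambda>n. Gamma M phi t (t - real (Suc n))"
  have inc: "incseq ?A" unfolding incseq_def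
    by (intro allI impI Gamma_sub) auto
  have L: "(\<lambda>n. prob (?A n)) \<longlonglongrightarrow> prob (S3 t)"
    unfolding S3_eq by (rule finite_Lim_measure_incseq[OF _ inc]) (auto intro: Gamma_sets)
  show ?thesis
  proof (rule tendstoI)
    fix e :: real assume e: "e > 0"
    from L e obtain N where N: "\<And>n. n \<ge> N \<Longrightarrow> dist (prob (?A n)) (prob (S3 t)) < e"
      unfolding LIMSEQ_def by blast
    show "\<forall>\<^sub>F t0 in at_bot. dist (prob (Gamma M phi t t0)) (prob (S3 t)) < e"
      unfolding eventually_at_bot_linorder
    proof (intro exI allI impI)
      fix t0 assume t0: "t0 \<le> t - real (Suc N)"
      have "prob (?A N) \<le> prob (Gamma M phi t t0)"
        using t0 by (intro finite_measure_mono Gamma_sub Gamma_sets) auto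
      moreover have "prob (Gamma M phi t t0) \<le> prob (S3 t)"
        using t0 by (intro Gamma_le_S3) auto
      moreover have "dist (prob (?A N)) (prob (S3 t)) < e" using N by auto
      ultimately show "dist (prob (Gamma M phi t t0)) (prob (S3 t)) < e"
        by (auto simp: dist_real_def)
    qed
  qed
qed


lemma cond23: "cond2 M phi \<longleftrightarrow> cond3 M phi"
proof -
  have "((\<lambda>t0. prob (Gamma M phi t t0)) \<longlongrightarrow> 1) at_bot \<longleftrightarrow> prob (S3 t) = 1" for t
    using lim_S3[of t] tendsto_unique[OF trivial_limit_at_bot_linorder] by metis
  then show ?thesis unfolding cond2_def cond3_def S3_def[symmetric] by simp
qed


lemma cond34: "cond3 M phi \<longleftrightarrow> cond4 M phi"
proof -
  have "prob (S3 t) = 1 \<longleftrightarrow> (AE w in M. is_singleton (pullback_set phi t w))" for t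
    using prob_Collect_eq_1[of "\<lambda>w. is_singleton (pullback_set phi t w)"] S3_sets[of t]
    unfolding S3_def pullback_singleton_iff by simp
  then show ?thesis unfolding cond3_def cond4_def S3_def[symmetric] by simp
qed


lemma cond21: "cond2 M phi \<Longrightarrow> cond1 M phi"
proof -
  assume c: "cond2 M phi"
  have "\<exists>t0<t. prob (Gamma M phi t t0) > 1/2" for t
  proof -
    have "\<forall>\<^sub>F t0 in at_bot. prob (Gamma M phi t t0) > 1/2"
      using c unfolding cond2_def by (intro order_tendstoD) auto
    then obtain N where "\<And>t0. t0 \<le> N \<Longrightarrow> prob (Gamma M phi t t0) > 1/2"
      unfolding eventually_at_bot_linorder by auto
    then show ?thesis by (intro exI[of _ "min N (t - 1)"]) auto
  qed
  then show ?thesis unfolding cond1_def by (intro exI[of _ "1/2"]) auto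
qed




lemma tau_less:
  fixes f :: "real \<Rightarrow> real"
  assumes f: "\<And>t. f t < t"
  shows "k < l \<Longrightarrow> (f ^^ l) t < (f ^^ k) t"
proof (induction l)
  case 0 then show ?case by simp
next
  case (Suc l)
  have "(f ^^ Suc l) t < (f ^^ l) t" using f by simp
  with Suc show ?case by (cases "k < l") (auto simp: less_Suc_eq)
qed

lemma tau_le:
  fixes f :: "real \<Rightarrow> real"
  assumes f: "\<And>t. f t < t"
  shows "k \<le> l \<Longrightarrow> (f ^^ l) t \<le> (f ^^ k) t"
  using tau_less[OF f, of k l t] by (cases "k = l") auto

lemma chain_bound:
  assumes ind: "indep_intervals M phi" and p: "0 < p"
    and f: "\<And>t. f t < t" and fp: "\<And>t. prob (Gamma M phi t (f t)) > p"
  shows "1 - prob (Gamma M phi t ((f ^^ n) t)) \<le> (1 - p)^n"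
proof (cases "n = 0")
  case True then show ?thesis by simp
next
  case False
  define \<tau> where "\<tau> k = (f ^^ k) t" for k
  have \<tau>S: "\<tau> (Suc k) = f (\<tau> k)" for k by (simp add: \<tau>_def)
  have \<tau>le: "k \<le> l \<Longrightarrow> \<tau> l \<le> \<tau> k" for k l unfolding \<tau>_def by (rule tau_le[OF f])
  have \<tau>lt: "k < l \<Longrightarrow> \<tau> l < \<tau> k" for k l unfolding \<tau>_def by (rule tau_less[OF f])
  have p1: "p < 1" using fp[of t] prob_le_1[of "Gamma M phi t (f t)"] by linarith
  define J where "J = (\<lambda>k. (\<tau> (Suc k), \<tau> k)) ` {..<n}"
  have inj: "inj_on (\<lambda>k. (\<tau> (Suc k), \<tau> k)) {..<n}"
    by (rule inj_onI) (metis less_irrefl nat_neq_iff prod.inject \<tau>lt)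
  define X where "X i w = (\<lambda>x. phi (snd i) (fst i) x w)" for i :: "real \<times> real" and w
  have iv: "indep_vars (\<lambda>_. count_space UNIV) X J"
    unfolding X_def
  proof (rule ind[unfolded indep_intervals_def, rule_format], intro conjI ballI impI)
    fix i assume "i \<in> J" then show "fst i \<le> snd i" unfolding J_def using \<tau>le by auto
  next
    fix i j assume ij: "i \<in> J" "j \<in> J" "i \<noteq> j"
    then obtain k l where i: "i = (\<tau> (Suc k), \<tau> k)" and j: "j = (\<tau> (Suc l), \<tau> l)" and "k \<noteq> l"
      unfolding J_def by auto
    then consider "k < l" | "l < k" by linarith
    then show "{fst i..<snd i} \<inter> {fst j..<snd j} = {}"
    proof cases
      case 1 then have "\<tau> l \<le> \<tau> (Suc k)" by (intro \<tau>le) auto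
      then show ?thesis using i j by auto
    next
      case 2 then have "\<tau> k \<le> \<tau> (Suc l)" by (intro \<tau>le) auto
      then show ?thesis using i j by auto
    qed
  qed
  define A where "A = {g :: 's \<Rightarrow> 's. \<not> (\<forall>x1 x2. g x1 = g x2)}"
  have XA: "X i -` A \<inter> space M = space M - Gamma M phi (snd i) (fst i)" for i
    by (auto simp: X_def A_def Gamma_def)
  have Jne: "J \<noteq> {}" "finite J" using False by (auto simp: J_def)
  have eqp: "prob (\<Inter>i\<in>J. X i -` A \<inter> space M) = (\<Prod>i\<in>J. prob (X i -` A \<inter> space M))"
    by (rule indep_varsD_finite[OF iv Jne]) simp
  have sub: "space M - Gamma M phi t (\<tau> n) \<subseteq> (\<Inter>i\<in>J. X i -` A \<inter> space M)"
  proof (unfold XA, intro INT_greatest)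
    fix i assume "i \<in> J"
    then obtain k where i: "i = (\<tau> (Suc k), \<tau> k)" and k: "k < n" unfolding J_def by auto
    have "Gamma M phi (\<tau> k) (\<tau> (Suc k)) \<subseteq> Gamma M phi t (\<tau> n)"
    proof (rule Gamma_sub)
      show "\<tau> n \<le> \<tau> (Suc k)" using k by (intro \<tau>le) auto
      show "\<tau> (Suc k) \<le> \<tau> k" by (intro \<tau>le) auto
      show "\<tau> k \<le> t" using \<tau>le[of 0 k] by (simp add: \<tau>_def)
    qed
    then show "space M - Gamma M phi t (\<tau> n) \<subseteq> space M - Gamma M phi (snd i) (fst i)"
      using i by auto
  qed
  have "0 \<le> \<tau> 0 - \<tau> n" using \<tau>le[of 0 n] by simp
  have "1 - prob (Gamma M phi t (\<tau> n)) = prob (space M - Gamma M phi t (\<tau> n))"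
    by (rule prob_compl[symmetric], rule Gamma_sets) (use \<tau>le[of 0 n] in \<open>simp add: \<tau>_def\<close>)
  also have "\<dots> \<le> prob (\<Inter>i\<in>J. X i -` A \<inter> space M)"
  proof (rule finite_measure_mono[OF sub])
    have Jle: "fst i \<le> snd i" if "i \<in> J" for i using that \<tau>le unfolding J_def by auto
    show "(\<Inter>i\<in>J. X i -` A \<inter> space M) \<in> events"
      unfolding XA using Jne Jle by (intro sets.finite_INT sets.compl_sets Gamma_sets) auto
  qed
  also have "\<dots> = (\<Prod>i\<in>J. prob (X i -` A \<inter> space M))" by (rule eqp)
  also have "\<dots> \<le> (\<Prod>i\<in>J. 1 - p)"
  proof (rule prod_mono, rule conjI)
    fix i assume "i \<in> J"
    then obtain k where i: "i = (\<tau> (Suc k), \<tau> k)" unfolding J_def by auto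
    have "prob (X i -` A \<inter> space M) = 1 - prob (Gamma M phi (\<tau> k) (\<tau> (Suc k)))"
      unfolding XA i by (simp add: prob_compl Gamma_sets \<tau>le)
    also have "\<dots> \<le> 1 - p" using fp[of "\<tau> k"] by (simp add: \<tau>S)
    finally show "prob (X i -` A \<inter> space M) \<le> 1 - p" .
  qed simp
  also have "\<dots> = (1 - p) ^ n" using card_image[OF inj] by (simp add: J_def)
  finally show ?thesis by (simp add: \<tau>_def)
qed



lemma cond12:
  assumes ind: "indep_intervals M phi" and c: "cond1 M phi"
  shows "cond2 M phi"
proof -
  from c obtain p where p: "p > 0" and ex: "\<And>t. \<exists>t0<t. prob (Gamma M phi t t0) > p"
    unfolding cond1_def by blast
  have "\<forall>t. \<exists>t0. t0 < t \<and> prob (Gamma M phi t t0) > p" using ex by blast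
  then obtain f where f: "\<And>t. f t < t" and fp: "\<And>t. prob (Gamma M phi t (f t)) > p"
    by metis
  have p1: "p < 1" using fp[of 0] prob_le_1[of "Gamma M phi 0 (f 0)"] by linarith
  show ?thesis unfolding cond2_def
  proof (intro allI tendstoI)
    fix t and e :: real assume e: "e > 0"
    obtain n where n: "(1 - p) ^ n < e" using real_arch_pow_inv[OF e, of "1 - p"] p by auto
    have tn: "(f ^^ n) t \<le> t" using tau_le[OF f, of 0 n t] by simp
    show "\<forall>\<^sub>F t0 in at_bot. dist (prob (Gamma M phi t t0)) 1 < e"
      unfolding eventually_at_bot_linorder
    proof (intro exI allI impI)
      fix t0 assume t0: "t0 \<le> (f ^^ n) t"
      have "prob (Gamma M phi t ((f ^^ n) t)) \<le> prob (Gamma M phi t t0)"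
        using t0 tn by (intro finite_measure_mono Gamma_sub Gamma_sets) auto
      moreover have "1 - prob (Gamma M phi t ((f ^^ n) t)) \<le> (1 - p) ^ n"
        by (rule chain_bound[OF ind p f fp])
      moreover have "prob (Gamma M phi t t0) \<le> 1" by (rule prob_le_1)
      ultimately show "dist (prob (Gamma M phi t t0)) 1 < e" using n by (auto simp: dist_real_def)
    qed
  qed
qed

lemma exp_bound:
  assumes ind: "indep_intervals M phi" and c: "cond1_uniform M phi"
  shows "\<exists>C \<alpha>. \<alpha> > 0 \<and> (\<forall>t t0. t0 \<le> t \<longrightarrow>
              1 - prob (Gamma M phi t t0) \<le> C * exp (- \<alpha> * (t - t0)))"
proof -
  from c obtain p T where p: "p > 0" and ex: "\<And>t. \<exists>t0<t. t - t0 \<le> T \<and> prob (Gamma M phi t t0) > p"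
    unfolding cond1_uniform_def by blast
  have "\<forall>t. \<exists>t0. t0 < t \<and> t - t0 \<le> T \<and> prob (Gamma M phi t t0) > p" using ex by blast
  then obtain f where f: "\<And>t. f t < t" and fT: "\<And>t. t - f t \<le> T" and fp: "\<And>t. prob (Gamma M phi t (f t)) > p"
    by metis
  have p1: "p < 1" using fp[of 0] prob_le_1[of "Gamma M phi 0 (f 0)"] by linarith
  have T: "T > 0" using f[of 0] fT[of 0] by linarith
  define q where "q = 1 - p"
  have q: "0 < q" "q < 1" using p p1 by (auto simp: q_def)
  define \<alpha> where "\<alpha> = - ln q / T"
  have \<alpha>: "\<alpha> > 0" using q T by (simp add: \<alpha>_def divide_neg_pos)
  have taulow: "(f ^^ k) t \<ge> t - real k * T" for k t
  proof (induction k)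
    case 0 then show ?case by simp
  next
    case (Suc k)
    have "f ((f ^^ k) t) \<ge> (f ^^ k) t - T" using fT[of "(f ^^ k) t"] by simp
    with Suc show ?case by (simp add: algebra_simps)
  qed
  have "\<forall>t t0. t0 \<le> t \<longrightarrow> 1 - prob (Gamma M phi t t0) \<le> (1 / q) * exp (- \<alpha> * (t - t0))"
  proof (intro allI impI)
    fix t t0 :: real assume tt: "t0 \<le> t"
    define n where "n = nat \<lfloor>(t - t0) / T\<rfloor>"
    have d0: "(t - t0) / T \<ge> 0" using tt T by simp
    have n1: "real n \<le> (t - t0) / T" using d0 by (simp add: n_def)
    have n2: "(t - t0) / T - 1 \<le> real n" using d0 by (simp add: n_def)
    have "real n * T \<le> t - t0" using n1 T by (simp add: pos_le_divide_eq)
    then have tn: "t0 \<le> (f ^^ n) t" using taulow[of t n] by linarith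
    have tn2: "(f ^^ n) t \<le> t" using tau_le[OF f, of 0 n t] by simp
    have "1 - prob (Gamma M phi t t0) \<le> 1 - prob (Gamma M phi t ((f ^^ n) t))"
      using tn tn2 tt by (intro diff_left_mono finite_measure_mono Gamma_sub Gamma_sets) auto
    also have "\<dots> \<le> q ^ n" unfolding q_def by (rule chain_bound[OF ind p f fp])
    also have "q ^ n = exp (real n * ln q)" using q by (simp add: exp_of_nat_mult)
    also have "\<dots> \<le> exp (((t - t0) / T - 1) * ln q)"
      using n2 q by (intro exp_mono mult_right_mono_neg) auto
    also have "((t - t0) / T - 1) * ln q = - \<alpha> * (t - t0) - ln q"
      using T by (simp add: \<alpha>_def field_simps)
    also have "exp (- \<alpha> * (t - t0) - ln q) = (1 / q) * exp (- \<alpha> * (t - t0))"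
      using q by (simp add: exp_diff)
    finally show "1 - prob (Gamma M phi t t0) \<le> (1 / q) * exp (- \<alpha> * (t - t0))" .
  qed
  with \<alpha> show ?thesis by blast
qed



lemma meas_phi'[measurable]: "(\<lambda>w. phi t (t - real n) x w) \<in> measurable M (count_space UNIV)"
  by (rule meas_phi) simp

lemma pb_char: "x \<in> pullback_set phi t w \<longleftrightarrow> (\<forall>n::nat. \<exists>y. phi t (t - real n) y w = x)"
proof
  assume x: "x \<in> pullback_set phi t w"
  show "\<forall>n::nat. \<exists>y. phi t (t - real n) y w = x"
  proof
    fix n :: nat
    have "x \<in> range (\<lambda>y. phi t (t - real n) y w)"
      using x pullback_sub[of "t - real n" t w] by auto
    then show "\<exists>y. phi t (t - real n) y w = x" by auto
  qed
next
  assume a: "\<forall>n::nat. \<exists>y. phi t (t - real n) y w = x"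
  show "x \<in> pullback_set phi t w" unfolding pullback_set_def
  proof (rule INT_I)
    fix s assume s: "s \<in> {..t}"
    obtain n :: nat where n: "t - s \<le> real n" using real_arch_simple by blast
    have "range (\<lambda>y. phi t (t - real n) y w) \<subseteq> range (\<lambda>y. phi t s y w)"
      using n s by (intro range_sub) auto
    moreover obtain y where "phi t (t - real n) y w = x" using a by blast
    ultimately show "x \<in> range (\<lambda>y. phi t s y w)" by (metis rangeI subsetD)
  qed
qed

lemma attr_meas: "{(x, w). w \<in> space M \<and> x \<in> pullback_set phi t w} \<in> sets (count_space UNIV \<Otimes>\<^sub>M M)"
proof -
  have "{(x, w). w \<in> space M \<and> x \<in> pullback_set phi t w} =
     {z \<in> space (count_space UNIV \<Otimes>\<^sub>M M). \<forall>n::nat. \<exists>y. phi t (t - real n) y (snd z) = fst z}"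
    by (auto simp: space_pair_measure pb_char)
  also have "\<dots> \<in> sets (count_space UNIV \<Otimes>\<^sub>M M)" by measurable
  finally show ?thesis .
qed

lemma img_range: "s \<le> t0 \<Longrightarrow> t0 \<le> t \<Longrightarrow>
    (\<lambda>x. phi t t0 x w) ` range (\<lambda>x. phi t0 s x w) = range (\<lambda>x. phi t s x w)"
  unfolding image_image by (simp only: cocycle[of s t0 t])

lemma invariance:
  assumes tt: "t0 \<le> t"
  shows "(\<lambda>x. phi t t0 x w) ` pullback_set phi t0 w = pullback_set phi t w"
proof -
  obtain s0 where s0: "s0 \<le> t0" "pullback_set phi t0 w = range (\<lambda>x. phi t0 s0 x w)"
    "\<And>s. s\<le>s0 \<Longrightarrow> range (\<lambda>x. phi t0 s x w) = range (\<lambda>x. phi t0 s0 x w)"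
    using stab[of t0 w] by blast
  have lhs: "(\<lambda>x. phi t t0 x w) ` pullback_set phi t0 w = range (\<lambda>x. phi t s0 x w)"
    unfolding s0(2) using s0(1) tt by (rule img_range)
  have "pullback_set phi t w = range (\<lambda>x. phi t s0 x w)"
  proof
    show "pullback_set phi t w \<subseteq> range (\<lambda>x. phi t s0 x w)"
      using s0(1) tt by (intro pullback_sub) simp
    show "range (\<lambda>x. phi t s0 x w) \<subseteq> pullback_set phi t w"
      unfolding pullback_set_def
    proof (rule INT_greatest)
      fix s assume s: "s \<in> {..t}"
      show "range (\<lambda>x. phi t s0 x w) \<subseteq> range (\<lambda>x. phi t s x w)"
      proof (cases "s \<le> s0")
        case True
        have "range (\<lambda>x. phi t s x w) = (\<lambda>x. phi t t0 x w) ` range (\<lambda>x. phi t0 s x w)"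
          using True s0(1) tt by (intro img_range[symmetric]) auto
        also have "\<dots> = (\<lambda>x. phi t t0 x w) ` range (\<lambda>x. phi t0 s0 x w)" using s0(3)[OF True] by simp
        also have "\<dots> = range (\<lambda>x. phi t s0 x w)" using s0(1) tt by (intro img_range) auto
        finally show ?thesis by simp
      next
        case False then show ?thesis using s by (intro range_sub) auto
      qed
    qed
  qed
  with lhs show ?thesis by simp
qed

lemma hsdist_self_singleton: "hsdist {a} {a} = 0"
  by (simp add: hsdist_def ddist_def)

lemma attractor:
  assumes ind: "indep_intervals M phi" and c: "cond1_uniform M phi"
  shows "global_random_forward_attractor M phi (pullback_set phi)"
  unfolding global_random_forward_attractor_def
proof (intro conjI allI)
  fix t show "{(x, w). w \<in> space M \<and> x \<in> pullback_set phi t w} \<in> sets (count_space UNIV \<Otimes>\<^sub>M M)"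
    by (rule attr_meas)
next
  show "AE w in M. \<forall>t0 t. t0 \<le> t \<longrightarrow> (\<lambda>x. phi t t0 x w) ` pullback_set phi t0 w = pullback_set phi t w"
    by (intro AE_I2 allI impI invariance)
next
  fix t0
  obtain C \<alpha> where \<alpha>: "\<alpha> > 0" and bd: "\<And>t t0. t0 \<le> t \<Longrightarrow> 1 - prob (Gamma M phi t t0) \<le> C * exp (- \<alpha> * (t - t0))"
    using exp_bound[OF ind c] by blast
  define E where "E = (\<Union>n::nat. Gamma M phi (t0 + real n) t0)"
  have Eev: "E \<in> events" unfolding E_def by (rule sets.countable_UN) (auto intro!: Gamma_sets)
  have lim: "(\<lambda>n::nat. 1 - C * exp (- \<alpha>) ^ n) \<longlonglongrightarrow> 1 - C * 0"
    using \<alpha> by (intro tendsto_intros) simp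
  have "1 \<le> prob E"
  proof (rule LIMSEQ_le_const2[OF lim[simplified]], intro exI allI impI)
    fix n :: nat
    have "1 - C * exp (- \<alpha>) ^ n = 1 - C * exp (- \<alpha> * ((t0 + real n) - t0))"
      by (simp add: exp_of_nat_mult[symmetric] mult.commute)
    also have "\<dots> \<le> prob (Gamma M phi (t0 + real n) t0)" using bd[of t0 "t0 + real n"] by simp
    also have "\<dots> \<le> prob E" unfolding E_def using Eev[unfolded E_def]
      by (intro finite_measure_mono) auto
    finally show "1 - C * exp (- \<alpha>) ^ n \<le> prob E" .
  qed
  then have "prob E = 1" using prob_le_1[of E] by simp
  then have "AE w in M. w \<in> E" by (rule AE_prob_1)
  then show "AE w in M. ((\<lambda>t. hsdist (range (\<lambda>x. phi t t0 x w)) (pullback_set phi t w)) \<longlongrightarrow> 0) at_top"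
  proof (rule eventually_mono)
    fix w assume "w \<in> E"
    then obtain n :: nat where wn: "w \<in> Gamma M phi (t0 + real n) t0" unfolding E_def by blast
    have ws: "w \<in> space M" using wn by (simp add: Gamma_def)
    show "((\<lambda>t. hsdist (range (\<lambda>x. phi t t0 x w)) (pullback_set phi t w)) \<longlongrightarrow> 0) at_top"
    proof (rule tendsto_eventually, unfold eventually_at_top_linorder, intro exI allI impI)
      fix t assume t: "t \<ge> t0 + real n"
      have "w \<in> Gamma M phi t t0" using wn t by (intro subsetD[OF Gamma_sub[of t0 t0 "t0 + real n" t]]) auto
      then have "is_singleton (range (\<lambda>x. phi t t0 x w))" using Gamma_iff ws by blast
      then obtain a where a: "range (\<lambda>x. phi t t0 x w) = {a}" by (auto simp: is_singleton_def)
      have "pullback_set phi t w \<subseteq> {a}" using pullback_sub[of t0 t w] t a by simp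
      then have "pullback_set phi t w = {a}" using pullback_ne[of t w] by blast
      then show "hsdist (range (\<lambda>x. phi t t0 x w)) (pullback_set phi t w) = 0"
        using a hsdist_self_singleton by simp
    qed
  qed
qed


end

theorem theorem9:
  fixes M :: "'w measure" and phi :: "real \<Rightarrow> real \<Rightarrow> 'a::finite \<Rightarrow> 'w \<Rightarrow> 'a"
  assumes "prob_space M" and "NRDS M phi"
  shows "(cond2 M phi \<longleftrightarrow> cond3 M phi) \<and> (cond3 M phi \<longleftrightarrow> cond4 M phi)
    \<and> (cond2 M phi \<longrightarrow> cond1 M phi)
    \<and> (indep_intervals M phi \<longrightarrow> (cond1 M phi \<longleftrightarrow> cond2 M phi))
    \<and> (indep_intervals M phi \<and> cond1_uniform M phi \<longrightarrow>
         (\<exists>C \<alpha>. \<alpha> > 0 \<and> (\<forall>t t0. t0 \<le> t \<longrightarrow>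
              1 - measure M (Gamma M phi t t0) \<le> C * exp (- \<alpha> * (t - t0))))
         \<and> global_random_forward_attractor M phi (pullback_set phi))"
proof -
  interpret nrds M phi using assms by (simp add: nrds_def nrds_axioms_def)
  show ?thesis using cond23 cond34 cond21 cond12 exp_bound attractor by blast
qed

end
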